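(* Let $a,d$ be real numbers and let $A_{n,k}(a,d)$ be the general Eulerian numbers defined below. Then for every integer $n\ge 1$ and every positive integer $i$, $$(a+(i-1)d)^n=\sum_{j=-1}^{n-1}A_{n,j}(a,d)\binom{i+j}{n}.$$
   Context: For real numbers $a,d$, the general Eulerian numbers $A_{n,k}(a,d)$ (integers $n\ge 0$, $k$) are defined by $A_{0,-1}(a,d)=1$, $A_{n,k}(a,d)=0$ whenever $k\ge n$ or $k\le -2$ (in particular $A_{0,k}=0$ for $k\neq -1$), and for $n\ge 1$, $-1\le k\le n-1$: $$A_{n,k}(a,d)=(-a+(k+2)d)A_{n-1,k}(a,d)+(a+(n-k-1)d)A_{n-1,k-1}(a,d).$$ For a nonnegative integer $x$ and $n\ge 0$, $\binom{x}{n}=x(x-1)\cdots(x-n+1)/n!$ (so it is $0$ when $x<n$). *)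

theory Defs
  imports Complex_Main
begin

fun genEuler :: "real \<Rightarrow> real \<Rightarrow> nat \<Rightarrow> int \<Rightarrow> real" where
  "genEuler a d 0 k = (if k = -1 then 1 else 0)"
| "genEuler a d (Suc n) k =
     (if k \<ge> int (Suc n) \<or> k \<le> -2 then 0
      else (- a + of_int (k + 2) * d) * genEuler a d n k
         + (a + of_int (int (Suc n) - k - 1) * d) * genEuler a d n (k - 1))"

end

theory Submission
  imports Defs
begin

lemma gE_zero: "k \<ge> int n \<or> k \<le> -2 \<Longrightarrow> genEuler a d n k = 0"
  by (cases n) auto

lemma sum_shift: "(\<Sum>j\<in>{-1..int n - 1}. g j) = (\<Sum>t\<le>n. g (int t - 1))"
proof (induction n)
  case 0
  then show ?case by simp
next
  case (Suc n)
  have "{-1..int (Suc n) - 1} = insert (int n) {-1..int n - 1}" by auto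
  then show ?case using Suc by (simp add: add.commute)
qed

lemma binom_key:
  fixes m n :: nat
  shows "(a + (real m - of_int j - 1) * d) * real (m choose n)
    = (a + (real n - of_int j - 1) * d) * real (Suc m choose Suc n)
      + ((of_int j + 2) * d - a) * real (m choose Suc n)"
proof -
  have e1: "real (Suc n) * real (Suc m choose Suc n) = (real m + 1) * real (m choose n)"
    using Suc_times_binomial_eq[of m n] by (metis of_nat_Suc of_nat_mult add.commute mult.commute)
  have e2: "real (Suc m choose Suc n) = real (m choose n) + real (m choose Suc n)"
    by simp
  have e3: "real (Suc n) * real (m choose Suc n) = (real m - real n) * real (m choose n)"
    using e1 e2 by (simp add: algebra_simps)
  have "real (Suc n) * ((a + (real m - of_int j - 1) * d) * real (m choose n))
    = real (Suc n) * ((a + (real n - of_int j - 1) * d) * real (Suc m choose Suc n)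
      + ((of_int j + 2) * d - a) * real (m choose Suc n))"
  proof -
    have "real (Suc n) * ((a + (real n - of_int j - 1) * d) * real (Suc m choose Suc n)
      + ((of_int j + 2) * d - a) * real (m choose Suc n))
      = (a + (real n - of_int j - 1) * d) * (real (Suc n) * real (Suc m choose Suc n))
      + ((of_int j + 2) * d - a) * (real (Suc n) * real (m choose Suc n))"
      by (simp add: algebra_simps)
    also have "\<dots> = (a + (real n - of_int j - 1) * d) * ((real m + 1) * real (m choose n))
      + ((of_int j + 2) * d - a) * ((real m - real n) * real (m choose n))"
      using e1 e3 by simp
    also have "\<dots> = real (Suc n) * ((a + (real m - of_int j - 1) * d) * real (m choose n))"
      by (simp add: algebra_simps)
    finally show ?thesis by simp
  qed
  then show ?thesis by simp
qed

lemma main: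
  fixes a d :: real and n i :: nat
  assumes "i \<ge> 1"
  shows "(a + (real i - 1) * d) ^ n
    = (\<Sum>t\<le>n. genEuler a d n (int t - 1) * real ((i + t - 1) choose n))"
proof (induction n)
  case 0
  then show ?case by simp
next
  case (Suc n)
  define c where "c = a + (real i - 1) * d"
  define B where "B t = genEuler a d n (int t - 1)" for t
  define al where "al t = a + (real n - (int t - 1) - 1) * d" for t
  define be where "be t = (of_int (int t - 1) + 2) * d - a" for t
  have IH: "c ^ n = (\<Sum>t\<le>n. B t * real ((i + t - 1) choose n))"
    using Suc by (simp add: c_def B_def)
  have k: "c * real ((i + t - 1) choose n) = al t * real ((i + t) choose Suc n)
      + be t * real ((i + t - 1) choose Suc n)" for t
  proof -
    have "i + t = Suc (i + t - 1)" using assms by simp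
    moreover have "c = a + (real (i + t - 1) - of_int (int t - 1) - 1) * d"
      using assms by (simp add: c_def of_nat_diff)
    ultimately show ?thesis
      using binom_key[of a "i + t - 1" "int t - 1" d n] by (simp add: al_def be_def)
  qed
  have "c ^ Suc n = (\<Sum>t\<le>n. B t * (c * real ((i + t - 1) choose n)))"
    using IH by (simp add: sum_distrib_left algebra_simps)
  also have "\<dots> = (\<Sum>t\<le>n. al t * B t * real ((i + t) choose Suc n))
      + (\<Sum>t\<le>n. be t * B t * real ((i + t - 1) choose Suc n))"
  proof -
    have "B t * (c * real ((i + t - 1) choose n)) = al t * B t * real ((i + t) choose Suc n)
      + be t * B t * real ((i + t - 1) choose Suc n)" for t
      by (simp only: k) (simp add: algebra_simps)
    then show ?thesis by (simp add: sum.distrib)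
  qed
  finally have L: "c ^ Suc n = \<dots>" .
  have Bn: "B (Suc n) = 0" unfolding B_def by (rule gE_zero) simp
  have S1: "(\<Sum>t\<le>Suc n. be t * B t * real ((i + t - 1) choose Suc n))
      = (\<Sum>t\<le>n. be t * B t * real ((i + t - 1) choose Suc n))"
    using Bn by simp
  have G0: "genEuler a d n (int 0 - 1 - 1) = 0" by (rule gE_zero) simp
  have S2: "(\<Sum>t\<le>Suc n. (a + of_int (int (Suc n) - (int t - 1) - 1) * d) *
        genEuler a d n (int t - 1 - 1) * real ((i + t - 1) choose Suc n))
      = (\<Sum>t\<le>n. al t * B t * real ((i + t) choose Suc n))"
    apply (subst sum.atMost_Suc_shift)
    using G0 assms by (simp add: al_def B_def algebra_simps)
  have R: "(\<Sum>t\<le>Suc n. genEuler a d (Suc n) (int t - 1) * real ((i + t - 1) choose Suc n))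
      = (\<Sum>t\<le>Suc n. be t * B t * real ((i + t - 1) choose Suc n)
         + (a + of_int (int (Suc n) - (int t - 1) - 1) * d) *
        genEuler a d n (int t - 1 - 1) * real ((i + t - 1) choose Suc n))"
    by (rule sum.cong) (auto simp: be_def B_def algebra_simps)
  show ?case
    unfolding c_def[symmetric] L R sum.distrib S1 S2 by simp
qed

theorem lemma2p3:
  fixes a d :: real and n i :: nat
  assumes "n \<ge> 1" and "i \<ge> 1"
  shows "(a + (real i - 1) * d) ^ n
    = (\<Sum>j\<in>{-1..int n - 1}. genEuler a d n j * real (nat (int i + j) choose n))"
proof -
  have "(\<Sum>j\<in>{-1..int n - 1}. genEuler a d n j * real (nat (int i + j) choose n))
     = (\<Sum>t\<le>n. genEuler a d n (int t - 1) * real (nat (int i + (int t - 1)) choose n))"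
    by (rule sum_shift)
  also have "\<dots> = (\<Sum>t\<le>n. genEuler a d n (int t - 1) * real ((i + t - 1) choose n))"
  proof (intro sum.cong refl)
    fix t assume "t \<in> {..n}"
    have "nat (int i + (int t - 1)) = i + t - 1" using assms(2) by linarith
    then show "genEuler a d n (int t - 1) * real (nat (int i + (int t - 1)) choose n)
      = genEuler a d n (int t - 1) * real ((i + t - 1) choose n)" by simp
  qed
  finally show ?thesis using main[OF assms(2)] by simp
qed

end
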